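(* Let $R=[0,1]^2$, $s\in\mathbb{N}$ and $u=2^{-s}$. If $u\le2^{-5/2}$, then the $4$-dimensional volume of the union $\mathcal{B}_{non\text{-}diag}$ of all non-diagonal box pairs satisfies $\mathrm{vol}(\mathcal{B}_{non\text{-}diag})\le\sqrt2\,u^{1/5}$.
   Context: For $p,q\in\mathbb{R}^2$ write $p\le q$ if both coordinates satisfy $\le$. $R$ is split into $2^s\times2^s$ congruent closed squares ("boxes") of side length $u$. A box pair is an ordered pair $(B_1,B_2)$ of boxes, viewed as $B_1\times B_2\subset\mathbb{R}^4$, with centers $c_1,c_2$. Let $\mathcal{L}$ be the set of non-vertical lines in $\mathbb{R}^2$ with positive slope; for $\ell\in\mathcal{L}$ with unit direction vector $a=(a_1,a_2)$ (positive coordinates) set $\hat{\ell}:=\min\{a_1,a_2\}$. A line $\ell\in\mathcal{L}$ traverses $(B_1,B_2)$ if it meets both $B_1$ and $B_2$. A box pair is non-diagonal if $c_1\le c_2$, $\|c_1-c_2\|_2\ge\sqrt u$, and every $\ell\in\mathcal{L}$ traversing $(B_1,B_2)$ satisfies $\hat{\ell}<u^{1/5}$. $\mathrm{vol}$ denotes $4$-dimensional Lebesgue measure. *)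

theory Defs
  imports "HOL-Analysis.Analysis"
begin

definition grid_box :: "real \<Rightarrow> nat \<Rightarrow> nat \<Rightarrow> (real \<times> real) set" where
  "grid_box u i j = cbox (real i * u, real j * u) (real (Suc i) * u, real (Suc j) * u)"

definition box_center :: "real \<Rightarrow> nat \<Rightarrow> nat \<Rightarrow> real \<times> real" where
  "box_center u i j = ((real i + 1/2) * u, (real j + 1/2) * u)"

definition pt_le :: "real \<times> real \<Rightarrow> real \<times> real \<Rightarrow> bool" where
  "pt_le p q \<longleftrightarrow> fst p \<le> fst q \<and> snd p \<le> snd q"

text \<open>Lines in L (non-vertical, positive slope) are
exactly those lines whose unit direction vector can be chosen with both coordinates
positive; that unit direction a is then unique and hat(l) = min a1 a2.\<close>
definition line_through :: "real \<times> real \<Rightarrow> real \<times> real \<Rightarrow> (real \<times> real) set" where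
  "line_through p a = {p + t *\<^sub>R a | t. True}"

definition pos_unit_dir :: "real \<times> real \<Rightarrow> bool" where
  "pos_unit_dir a \<longleftrightarrow> fst a > 0 \<and> snd a > 0 \<and> norm a = 1"

definition traverses :: "(real \<times> real) set \<Rightarrow> (real \<times> real) set \<Rightarrow> (real \<times> real) set \<Rightarrow> bool" where
  "traverses l B1 B2 \<longleftrightarrow> l \<inter> B1 \<noteq> {} \<and> l \<inter> B2 \<noteq> {}"

definition non_diagonal :: "real \<Rightarrow> nat \<times> nat \<Rightarrow> nat \<times> nat \<Rightarrow> bool" where
  "non_diagonal u b1 b2 \<longleftrightarrow>
     (let c1 = box_center u (fst b1) (snd b1); c2 = box_center u (fst b2) (snd b2);
          B1 = grid_box u (fst b1) (snd b1); B2 = grid_box u (fst b2) (snd b2) in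
      pt_le c1 c2 \<and> dist c1 c2 \<ge> sqrt u \<and>
      (\<forall>p a. pos_unit_dir a \<and> traverses (line_through p a) B1 B2
              \<longrightarrow> min (fst a) (snd a) < u powr (1/5)))"

definition B_non_diag :: "nat \<Rightarrow> ((real \<times> real) \<times> (real \<times> real)) set" where
  "B_non_diag s = (let u = 1 / 2 ^ s in
     \<Union> {grid_box u (fst b1) (snd b1) \<times> grid_box u (fst b2) (snd b2) | b1 b2.
         fst b1 < 2 ^ s \<and> snd b1 < 2 ^ s \<and> fst b2 < 2 ^ s \<and> snd b2 < 2 ^ s \<and>
         non_diagonal u b1 b2})"

end

theory Submission imports Defs begin

lemma geom:
  fixes u e :: real and i1 j1 i2 j2 :: nat
  assumes u: "u > 0" and nd: "non_diagonal u (i1,j1) (i2,j2)" and e: "e = u powr (1/5)"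
  shows "i1 \<le> i2 \<and> j1 \<le> j2 \<and>
     (real j2 - real j1 \<le> sqrt 2 * e * (real i2 - real i1) \<or>
      real i2 - real i1 \<le> sqrt 2 * e * (real j2 - real j1))"
proof -
  define c1 where "c1 = box_center u i1 j1"
  define c2 where "c2 = box_center u i2 j2"
  have le: "pt_le c1 c2" and all: "\<And>p a. pos_unit_dir a \<Longrightarrow> traverses (line_through p a) (grid_box u i1 j1) (grid_box u i2 j2)
              \<Longrightarrow> min (fst a) (snd a) < e"
    using nd by (auto simp: non_diagonal_def Let_def c1_def c2_def e)
  have ij: "i1 \<le> i2" "j1 \<le> j2" using le u by (auto simp: pt_le_def c1_def c2_def box_center_def)
  define k where "k = real i2 - real i1"
  define m where "m = real j2 - real j1"
  have k0: "k \<ge> 0" "m \<ge> 0" using ij by (auto simp: k_def m_def)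
  have e0: "e \<ge> 0" using e by simp
  show ?thesis
  proof (cases "k = 0 \<or> m = 0")
    case True
    then show ?thesis using ij k0 e0 by (auto simp: k_def[symmetric] m_def[symmetric])
  next
    case False
    then have kp: "k > 0" "m > 0" using k0 by auto
    define q where "q = sqrt (k^2 + m^2)"
    have qp: "q > 0" using kp by (simp add: q_def add_pos_pos)
    define a where "a = (k / q, m / q)"
    have na: "norm a = 1"
    proof -
      have "norm a = sqrt ((k/q)^2 + (m/q)^2)" using kp qp by (simp add: a_def norm_Pair)
      also have "(k/q)^2 + (m/q)^2 = (k^2+m^2) / q^2" by (simp add: power_divide add_divide_distrib)
      also have "q^2 = k^2+m^2" unfolding q_def by simp
      finally show ?thesis using qp q_def by auto
    qed
    have pa: "pos_unit_dir a" using na kp qp by (simp add: pos_unit_dir_def a_def)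
    have c1B: "c1 \<in> grid_box u i1 j1" using u
      by (auto simp: c1_def box_center_def grid_box_def cbox_Pair_eq mult_right_mono)
    have c2B: "c2 \<in> grid_box u i2 j2" using u
      by (auto simp: c2_def box_center_def grid_box_def cbox_Pair_eq mult_right_mono)
    have "c2 = c1 + (u * q) *\<^sub>R a"
      proof -
        have "(u * q) *\<^sub>R a = (u * k, u * m)" using qp by (simp add: a_def)
        then show ?thesis by (simp add: c1_def c2_def box_center_def k_def m_def right_diff_distrib distrib_right mult.commute distrib_left)
      qed
    then have "c2 \<in> line_through c1 a" unfolding line_through_def by blast
    moreover have "c1 \<in> line_through c1 a" unfolding line_through_def by (auto intro: exI[of _ 0])
    ultimately have "traverses (line_through c1 a) (grid_box u i1 j1) (grid_box u i2 j2)"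
      using c1B c2B unfolding traverses_def by blast
    then have "min (fst a) (snd a) < e" using all pa by blast
    then have mn: "min k m < e * q" using qp by (simp add: a_def min_def divide_less_eq split: if_splits)
    have "q \<le> sqrt 2 * max k m"
    proof -
      have "k^2 + m^2 \<le> 2 * (max k m)^2" using kp
        by (auto simp: max_def power2_eq_square intro: mult_mono)
      then have "q \<le> sqrt (2 * (max k m)^2)" unfolding q_def by (rule real_sqrt_le_mono)
      also have "\<dots> = sqrt 2 * max k m" using kp by (simp add: real_sqrt_mult)
      finally show ?thesis .
    qed
    then have "e * q \<le> e * (sqrt 2 * max k m)" using e0 by (rule mult_left_mono)
    then have "min k m < sqrt 2 * e * max k m" using mn by (simp add: mult.assoc mult.left_commute)
    then show ?thesis using ij by (auto simp: k_def[symmetric] m_def[symmetric] min_def max_def split: if_splits)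
  qed
qed

lemma sum_formula:
  "(\<Sum>a<N. (real a + 1) * (c * real a + 1)) = c * (real N - 1) * real N * (real N + 1) / 3 + real N * (real N + 1) / 2"
  by (induction N) (simp_all add: field_simps)

lemma grid_meas:
  assumes "u \<ge> 0"
  shows "measure lborel (grid_box u i j \<times> grid_box u i' j') = u^4"
proof -
  have "grid_box u i j \<times> grid_box u i' j' = cbox ((real i * u, real j * u), (real i' * u, real j' * u))
     ((real (Suc i) * u, real (Suc j) * u), (real (Suc i') * u, real (Suc j') * u))"
    by (simp add: grid_box_def cbox_Pair_eq)
  then have "measure lborel (grid_box u i j \<times> grid_box u i' j') = 
     measure lborel (cbox (real i * u) (real (Suc i) * u)) * measure lborel (cbox (real j * u) (real (Suc j) * u)) *
     (measure lborel (cbox (real i' * u) (real (Suc i') * u)) * measure lborel (cbox (real j' * u) (real (Suc j') * u)))"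
    by (simp only: content_Pair)
  also have "\<dots> = u^4" using assms
    by (simp add: cbox_interval content_real mult_right_mono algebra_simps power4_eq_xxxx)
  finally show ?thesis .
qed

definition TT :: "nat \<Rightarrow> real \<Rightarrow> (nat \<times> nat \<times> nat \<times> nat) set" where
  "TT N c = (SIGMA a:{..<N}. {..a} \<times> {..<N} \<times> {..nat \<lfloor>c * real a\<rfloor>})"

lemma TT_finite: "finite (TT N c)"
  unfolding TT_def by (intro finite_SigmaI) auto

lemma TT_card:
  assumes "c \<ge> 0"
  shows "real (card (TT N c)) \<le> real N * (c * (real N - 1) * real N * (real N + 1) / 3 + real N * (real N + 1) / 2)"
proof -
  have "card (TT N c) = (\<Sum>a<N. (a + 1) * (N * (nat \<lfloor>c * real a\<rfloor> + 1)))"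
    unfolding TT_def by (simp add: card_SigmaI card_cartesian_product)
  then have "real (card (TT N c)) = (\<Sum>a<N. (real a + 1) * (real N * (real (nat \<lfloor>c * real a\<rfloor>) + 1)))"
    by (simp only: of_nat_sum of_nat_mult of_nat_add of_nat_1)
  also have "\<dots> \<le> (\<Sum>a<N. (real a + 1) * (real N * (c * real a + 1)))"
  proof (rule sum_mono)
    fix a assume "a \<in> {..<N}"
    have "real (nat \<lfloor>c * real a\<rfloor>) \<le> c * real a" using assms by simp
    then show "(real a + 1) * (real N * (real (nat \<lfloor>c * real a\<rfloor>) + 1)) \<le> (real a + 1) * (real N * (c * real a + 1))"
      by (intro mult_left_mono) auto
  qed
  also have "\<dots> = real N * (\<Sum>a<N. (real a + 1) * (c * real a + 1))"
    by (simp add: sum_distrib_left algebra_simps)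
  also have "\<dots> = real N * (c * (real N - 1) * real N * (real N + 1) / 3 + real N * (real N + 1) / 2)"
    by (simp add: sum_formula)
  finally show ?thesis .
qed


lemma grid_sets: "grid_box u i j \<times> grid_box u i' j' \<in> sets borel"
  unfolding grid_box_def cbox_Pair_eq[symmetric] by (simp add: borel_closed)
lemma Beq:
  fixes s N :: nat and u :: real
  assumes "u = 1 / 2 ^ s" "N = 2 ^ s"
  shows "B_non_diag s = (\<Union>x\<in>{(b1, b2). fst b1 < N \<and> snd b1 < N \<and> fst b2 < N \<and> snd b2 < N \<and> non_diagonal u b1 b2}.
     (\<lambda>(b1::nat\<times>nat, b2::nat\<times>nat). grid_box u (fst b1) (snd b1) \<times> grid_box u (fst b2) (snd b2)) x)"
  unfolding B_non_diag_def Let_def assms(1)[symmetric] assms(2)[symmetric]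
  apply (rule arg_cong[where f=Union])
  apply (rule set_eqI)
  apply (simp add: image_iff)
  apply blast
  done

theorem lemma5:
  fixes s :: nat and u :: real
  assumes "u = 1 / 2 ^ s"
    and "u \<le> 2 powr (-5/2)"
  shows "measure lborel (B_non_diag s) \<le> sqrt 2 * u powr (1/5)"
proof -
  define N :: nat where "N = 2 ^ s"
  have uN: "u = 1 / real N" using assms(1) by (simp add: N_def)
  have u0: "u > 0" using assms(1) by simp
  define e where "e = u powr (1/5)"
  define c where "c = sqrt 2 * e"
  have c0: "c \<ge> 0" by (simp add: c_def e_def)
  have u4: "u powr (4/5) \<le> 1/4"
  proof -
    have "u powr (4/5) \<le> (2 powr (-5/2)) powr (4/5)"
      using u0 assms(2) by (intro powr_mono2) auto
    also have "\<dots> = 2 powr (-2)" by (simp add: powr_powr)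
    also have "\<dots> = 1/4" by (simp add: powr_minus powr_numeral)
    finally show ?thesis .
  qed
  have ue: "4 * u \<le> e"
  proof -
    have "u = e * u powr (4/5)" using u0 by (simp add: e_def flip: powr_add)
    also have "\<dots> \<le> e * (1/4)" using u4 by (intro mult_left_mono) (auto simp: e_def)
    finally show ?thesis by simp
  qed
  have N1: "real N > 0" by (simp add: N_def)
  have "2 powr (-5/2::real) < 2 powr 0" by (intro powr_less_mono) auto
  then have u1: "u < 1" using assms(2) by simp
  have N2: "real N \<ge> 2"
  proof -
    have "real N > 1" using u1 uN N1 by (simp add: divide_less_eq)
    then have "N > 1" by simp
    then have "N \<ge> 2" by linarith
    then show ?thesis by simp
  qed
  have cN: "c * real N \<ge> 5"
  proof -
    have "4 = 4 * u * real N" using uN N1 by simp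
    also have "\<dots> \<le> e * real N" using ue N1 by (intro mult_right_mono) auto
    finally have h4: "4 \<le> e * real N" .
    have s2: "5/4 \<le> sqrt 2" by (rule real_le_rsqrt) (simp add: power2_eq_square)
    have "5/4 * 4 \<le> sqrt 2 * (e * real N)" by (rule mult_mono[OF s2 h4]) auto
    then show ?thesis by (simp add: c_def mult.assoc)
  qed
  define P where "P = {(b1, b2). fst b1 < N \<and> snd b1 < N \<and> fst b2 < N \<and> snd b2 < N \<and> non_diagonal u b1 b2}"
  define F where "F = (\<lambda>(b1::nat\<times>nat, b2::nat\<times>nat). grid_box u (fst b1) (snd b1) \<times> grid_box u (fst b2) (snd b2))"
  have Beq: "B_non_diag s = (\<Union>x\<in>P. F x)"
    unfolding P_def F_def by (rule Beq[OF assms(1) N_def])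
  have Pfin: "finite P"
  proof (rule finite_subset)
    show "P \<subseteq> ({..<N} \<times> {..<N}) \<times> ({..<N} \<times> {..<N})" by (auto simp: P_def)
  qed auto
  have "measure lborel (B_non_diag s) \<le> (\<Sum>x\<in>P. measure lborel (F x))"
    unfolding Beq F_def by (rule measure_UNION_le[OF Pfin]) (simp add: case_prod_beta grid_sets)
  also have "\<dots> = real (card P) * u^4"
    using u0 by (simp add: F_def grid_meas case_prod_beta)
  finally have m1: "measure lborel (B_non_diag s) \<le> real (card P) * u^4" .
  define f where "f = (\<lambda>(a::nat, b::nat, x::nat, d::nat). ((b, x), (a, x + d)))"
  define g where "g = (\<lambda>(a::nat, b::nat, x::nat, d::nat). ((x, b), (x + d, a)))"
  have Psub: "P \<subseteq> f ` TT N c \<union> g ` TT N c"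
  proof
    fix y assume "y \<in> P"
    then obtain i1 j1 i2 j2 where y: "y = ((i1, j1), (i2, j2))" and lt: "i1 < N" "j1 < N" "i2 < N" "j2 < N"
      and nd: "non_diagonal u (i1, j1) (i2, j2)"
      by (auto simp: P_def)
    from geom[OF u0 nd refl] have G: "i1 \<le> i2" "j1 \<le> j2"
      "real j2 - real j1 \<le> c * (real i2 - real i1) \<or> real i2 - real i1 \<le> c * (real j2 - real j1)"
      by (auto simp: c_def e_def)
    from G(3) show "y \<in> f ` TT N c \<union> g ` TT N c"
    proof
      assume h: "real j2 - real j1 \<le> c * (real i2 - real i1)"
      have "c * (real i2 - real i1) \<le> c * real i2" using c0 by (intro mult_left_mono) auto
      then have "real (j2 - j1) \<le> c * real i2" using h G by (simp add: of_nat_diff)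
      then have "j2 - j1 \<le> nat \<lfloor>c * real i2\<rfloor>" by (simp add: le_nat_iff le_floor_iff)
      then have "(i2, i1, j1, j2 - j1) \<in> TT N c" using lt G by (auto simp: TT_def)
      moreover have "y = f (i2, i1, j1, j2 - j1)" using G by (simp add: y f_def)
      ultimately show ?thesis by blast
    next
      assume h: "real i2 - real i1 \<le> c * (real j2 - real j1)"
      have "c * (real j2 - real j1) \<le> c * real j2" using c0 by (intro mult_left_mono) auto
      then have "real (i2 - i1) \<le> c * real j2" using h G by (simp add: of_nat_diff)
      then have "i2 - i1 \<le> nat \<lfloor>c * real j2\<rfloor>" by (simp add: le_nat_iff le_floor_iff)
      then have "(j2, j1, i1, i2 - i1) \<in> TT N c" using lt G by (auto simp: TT_def)
      moreover have "y = g (j2, j1, i1, i2 - i1)" using G by (simp add: y g_def)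
      ultimately show ?thesis by blast
    qed
  qed
  have "card P \<le> card (f ` TT N c \<union> g ` TT N c)"
    by (rule card_mono) (auto simp: Psub TT_finite)
  also have "\<dots> \<le> card (f ` TT N c) + card (g ` TT N c)" by (rule card_Un_le)
  also have "\<dots> \<le> card (TT N c) + card (TT N c)" by (intro add_mono card_image_le TT_finite)
  finally have "real (card P) \<le> 2 * real (card (TT N c))" by linarith
  also have "\<dots> \<le> 2 * (real N * (c * (real N - 1) * real N * (real N + 1) / 3 + real N * (real N + 1) / 2))"
    using TT_card[OF c0, of N] by linarith
  finally have cP: "real (card P) \<le> 2 * (real N * (c * (real N - 1) * real N * (real N + 1) / 3 + real N * (real N + 1) / 2))" .
  define n where "n = real N"
  have n2: "n \<ge> 2" and cn: "c * n \<ge> 5" using N2 cN by (auto simp: n_def)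
  have key: "2 * (n * (c * (n - 1) * n * (n + 1) / 3 + n * (n + 1) / 2)) \<le> c * n^4"
  proof -
    have "5 * n \<le> c * n * n" using n2 cn by (intro mult_right_mono) auto
    moreover have "3 * (n + 1) \<le> 5 * n" using n2 by simp
    ultimately have "3 * (n + 1) \<le> c * n * n" by (rule order_trans[rotated])
    then have "n^2 * (3 * (n + 1)) \<le> n^2 * (c * n * n)" by (intro mult_left_mono) auto
    moreover have "c * n^2 \<ge> 0" using c0 n2 by simp
    moreover have "2 * (n * (c * (n - 1) * n * (n + 1) / 3 + n * (n + 1) / 2)) =
       2/3 * (c * n^4) - 2/3 * (c * n^2) + n^2 * (n + 1)"
      by (simp add: field_simps power2_eq_square power4_eq_xxxx)
    moreover have "n^2 * (c * n * n) = c * n^4" by (simp add: power2_eq_square power4_eq_xxxx)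
    ultimately show ?thesis by linarith
  qed
  have "real (card P) * u^4 \<le> 2 * (n * (c * (n - 1) * n * (n + 1) / 3 + n * (n + 1) / 2)) * u^4"
    using cP by (intro mult_right_mono) (auto simp: n_def)
  also have "\<dots> \<le> c * n^4 * u^4" using key by (intro mult_right_mono) auto
  also have "\<dots> = c" using N1 by (simp add: n_def uN power_divide)
  finally show ?thesis using m1 by (simp add: c_def e_def)
qed

end
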